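(* Let $\mu=\mu^{(1)}$ be the Cox point process described in the context (with $l=1$) and $r=r^{(1)}$ its Papangelou intensity. Then for each $n\in\mathbb N$ and for $\nu$-a.a. $x\in X$, $$\int_\Gamma r(x,\gamma)^n\,\mu(d\gamma)\le\frac{(2n)!}{2^n\,n!}\,k(x,x)^n .$$
   Context: $X$ is a locally compact Polish space, $\nu$ a non-atomic Radon measure on $X$, $\mathcal B_0(X)$ the relatively compact Borel sets; $\Gamma$ is the space of locally finite subsets of $X$ (configurations) with the vague topology and Borel $\sigma$-algebra. $K$ is a bounded self-adjoint nonnegative operator on the real space $L^2(X,\nu)$, locally of trace class; $\sqrt K$ has integral kernel $\varkappa$ and $k(x,y)=\int_X\varkappa(x,z)\varkappa(y,z)\nu(dz)$, so $k(x,x)=\|\varkappa(x,\cdot)\|^2_{L^2(X,\nu)}$. $Y=(Y(x))_{x\in X}$ is a random field on $(\Omega,\mathcal A,\mathbb P)$ with $(x,\omega)\mapsto Y(x,\omega)$ measurable, $Y(x)$ centered Gaussian for $\nu$-a.a. $x$, and $\mathbb E(Y(x)Y(y))=k(x,y)$ for $\nu^{\otimes2}$-a.a. $(x,y)$ and $\nu$-a.a. $x=y$. $\mu^{(1)}$ is the Cox process $\mu^{(1)}(d\gamma)=\int_\Omega\mathbb P(d\omega)\pi_{Y(x,\omega)^2\nu(dx)}(d\gamma)$, where $\pi_{g(x)\nu(dx)}$ is the Poisson point process with intensity $g\,d\nu$. With $\widetilde{\mathbb P}(d\omega,d\gamma)=\mathbb P(d\omega)\pi_{Y(x,\omega)^2\nu(dx)}(d\gamma)$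 on $\Omega\times\Gamma$ and $\mathcal F$ the $\sigma$-algebra generated by the maps $(\omega,\gamma)\mapsto F(\gamma)$, the Papangelou intensity is $r^{(1)}(x,\gamma)=\widetilde{\mathbb E}(Y(x)^2\mid\mathcal F)(\gamma)$. *)

theory Defs
  imports "HOL-Probability.Probability"
begin

definition relcompact_borel :: "'a::topological_space set set" where
  "relcompact_borel = {L. L \<in> sets borel \<and> compact (closure L)}"

definition locfin :: "'a::topological_space set \<Rightarrow> bool" where
  "locfin g \<longleftrightarrow> (\<forall>C. compact C \<longrightarrow> finite (g \<inter> C))"

text \<open>The configuration space Gamma as a measurable space: its sigma-algebra is generated
  by the counting maps g |-> card (g \<inter> L), L relatively compact Borel (this is the Borel
  sigma-algebra of the vague topology).\<close>
definition Gamma_M :: "'a::topological_space set measure" where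
  "Gamma_M = sigma {g. locfin g}
     {{g. locfin g \<and> card (g \<inter> L) = n} | L n. L \<in> relcompact_borel}"

definition poisson_pp :: "'a::topological_space measure \<Rightarrow> ('a \<Rightarrow> real) \<Rightarrow> 'a set measure \<Rightarrow> bool" where
  "poisson_pp nu g P \<longleftrightarrow> prob_space P \<and> sets P = sets Gamma_M \<and>
     (\<forall>(I::nat set) L n. finite I \<longrightarrow> (\<forall>i\<in>I. L i \<in> relcompact_borel) \<longrightarrow> disjoint_family_on L I \<longrightarrow>
        emeasure P {G \<in> space Gamma_M. \<forall>i\<in>I. card (G \<inter> L i) = n i}
        = (\<Prod>i\<in>I. ennreal (exp (- enn2real (\<integral>\<^sup>+x\<in>L i. ennreal (g x) \<partial>nu))
                 * enn2real (\<integral>\<^sup>+x\<in>L i. ennreal (g x) \<partial>nu) ^ n i / fact (n i))))"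

definition centered_gaussian :: "'w measure \<Rightarrow> ('w \<Rightarrow> real) \<Rightarrow> bool" where
  "centered_gaussian P Z \<longleftrightarrow> Z \<in> borel_measurable P \<and>
     (\<exists>s\<ge>0. distr P borel Z = (if s = 0 then return borel 0 else density lborel (normal_density 0 s)))"

definition kk :: "'a measure \<Rightarrow> ('a \<Rightarrow> 'a \<Rightarrow> real) \<Rightarrow> 'a \<Rightarrow> 'a \<Rightarrow> real" where
  "kk nu kap x y = (\<integral>z. kap x z * kap y z \<partial>nu)"

text \<open>The conditional expectation is
  F-measurable, hence does not depend on the Omega-coordinate; we evaluate it at any omega.\<close>
definition papangelou ::
  "'w measure \<Rightarrow> ('w \<times> 'a::topological_space set) measure \<Rightarrow> ('w \<Rightarrow> 'a \<Rightarrow> real) \<Rightarrow> 'a \<Rightarrow> 'a set \<Rightarrow> real" where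
  "papangelou P Pt Y x G =
     real_cond_exp Pt (vimage_algebra (space Pt) snd Gamma_M) (\<lambda>z. (Y (fst z) x)\<^sup>2)
       (SOME w. w \<in> space P, G)"

end

theory Submission
  imports Defs
begin

lemma convex_abs_power: "convex_on (UNIV::real set) (\<lambda>t. \<bar>t\<bar> ^ n)"
proof (rule convex_onI)
  fix t x y :: real assume t: "0 < t" "t < 1"
  have c: "convex_on {0::real..} (\<lambda>x. x^n)"
  proof (cases "even n")
    case True
    then show ?thesis using convex_on_subset[OF convex_power_even[OF True]] by blast
  next
    case False
    then show ?thesis using convex_power_odd by blast
  qed
  have "\<bar>(1 - t) *\<^sub>R x + t *\<^sub>R y\<bar> \<le> (1 - t) * \<bar>x\<bar> + t * \<bar>y\<bar>"
  proof -
    have "\<bar>(1 - t) *\<^sub>R x + t *\<^sub>R y\<bar> \<le> \<bar>(1 - t) * x\<bar> + \<bar>t * y\<bar>"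
      by (simp add: abs_triangle_ineq)
    also have "\<dots> = (1 - t) * \<bar>x\<bar> + t * \<bar>y\<bar>" using t by (simp add: abs_mult)
    finally show ?thesis .
  qed
  then have "\<bar>(1 - t) *\<^sub>R x + t *\<^sub>R y\<bar> ^ n \<le> ((1 - t) * \<bar>x\<bar> + t * \<bar>y\<bar>) ^ n"
    by (rule power_mono) auto
  also have "\<dots> = ((1 - t) *\<^sub>R \<bar>x\<bar> + t *\<^sub>R \<bar>y\<bar>) ^ n" by simp
  also have "\<dots> \<le> (1 - t) * \<bar>x\<bar> ^ n + t * \<bar>y\<bar> ^ n"
    using convex_onD[OF c, of t "\<bar>x\<bar>" "\<bar>y\<bar>"] t by simp
  finally show "\<bar>(1 - t) *\<^sub>R x + t *\<^sub>R y\<bar> ^ n \<le> (1 - t) * \<bar>x\<bar> ^ n + t * \<bar>y\<bar> ^ n" .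
qed simp

lemma countable_compact_family:
  assumes lc: "locally_compact_space (euclidean :: 'a::polish_space topology)"
  shows "\<exists>T::'a set set. countable T \<and> (\<forall>K\<in>T. compact K) \<and> (\<forall>C. compact C \<longrightarrow> (\<exists>K\<in>T. C \<subseteq> K))"
proof -
  obtain B :: "'a set set" where B: "countable B" "topological_basis B"
    using ex_countable_basis by blast
  define U where "U = {V\<in>B. compact (closure V)}"
  have cU: "countable U" using B(1) unfolding U_def by simp
  have cover: "\<exists>V\<in>U. x \<in> V" for x
  proof -
    obtain W K where W: "open W" "compact K" "x \<in> W" "W \<subseteq> K"
      using lc unfolding locally_compact_space_def by (metis UNIV_I compactin_euclidean_iff open_openin topspace_euclidean)
    obtain V where V: "V \<in> B" "x \<in> V" "V \<subseteq> W" using topological_basisE[OF B(2) W(1) W(3)] by blast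
    have "closure V \<subseteq> K" using W V closure_minimal compact_imp_closed by (metis subset_trans)
    then have "compact (closure V)" using W(2) compact_Int_closed[of K "closure V"]
      by (metis closed_closure inf.absorb_iff2)
    then show ?thesis using V U_def by blast
  qed
  define T where "T = (\<lambda>F. \<Union>V\<in>F. closure V) ` {F. finite F \<and> F \<subseteq> U}"
  have "countable T" unfolding T_def using countable_Collect_finite_subset[OF cU] by simp
  moreover have "\<forall>K\<in>T. compact K" unfolding T_def U_def by auto
  moreover have "\<exists>K\<in>T. C \<subseteq> K" if C: "compact C" for C
  proof -
    have op: "\<And>V. V\<in>U \<Longrightarrow> open V" using B(2) topological_basis_open U_def by auto
    have cu: "C \<subseteq> \<Union>U" using cover by blast
    then obtain F where F: "F \<subseteq> U" "finite F" "C \<subseteq> \<Union>F"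
      using compactE[OF C cu op] by metis
    have "C \<subseteq> (\<Union>V\<in>F. closure V)" using F(3) closure_subset by blast
    then show ?thesis using F unfolding T_def by blast
  qed
  ultimately show ?thesis by blast
qed

lemma vimage_factor:
  fixes h :: "'a \<Rightarrow> real"
  assumes h: "h \<in> borel_measurable (vimage_algebra X f M)" and f: "f \<in> X \<rightarrow> space M"
    and z: "z \<in> X" "z' \<in> X" "f z = f z'"
  shows "h z = h z'"
proof -
  have "h -` {h z} \<inter> space (vimage_algebra X f M) \<in> sets (vimage_algebra X f M)"
    using measurable_sets[OF h, of "{h z}"] by simp
  then obtain A where A: "A \<in> sets M" "h -` {h z} \<inter> X = f -` A \<inter> X"
    using sets_vimage_algebra2[OF f] by auto
  have "z \<in> f -` A \<inter> X" using A(2) z by blast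
  then have "z' \<in> f -` A \<inter> X" using z by auto
  then have "z' \<in> h -` {h z} \<inter> X" using A(2) by simp
  then show ?thesis by simp
qed


lemma gauss_moments:
  assumes P: "prob_space P" and G: "centered_gaussian P Z"
  shows "\<exists>s\<ge>0. \<forall>n. integrable P (\<lambda>w. Z w ^ (2*n)) \<and>
     (\<integral>w. Z w ^ (2*n) \<partial>P) = fact (2*n) / (2^n * fact n) * (s^2)^n"
proof -
  obtain s where s: "s \<ge> 0" and Zm: "Z \<in> borel_measurable P"
    and D: "distr P borel Z = (if s = 0 then return borel 0 else density lborel (normal_density 0 s))"
    using G unfolding centered_gaussian_def by blast
  have I: "integrable P (\<lambda>w. Z w ^ (2*n)) \<longleftrightarrow> integrable (distr P borel Z) (\<lambda>t. t ^ (2*n))" for n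
    by (rule integrable_distr_eq[symmetric]) (use Zm in auto)
  have E: "(\<integral>w. Z w ^ (2*n) \<partial>P) = (\<integral>t. t ^ (2*n) \<partial>distr P borel Z)" for n
    by (rule integral_distr[symmetric]) (use Zm in auto)
  show ?thesis
  proof (cases "s = 0")
    case True
    then have D0: "distr P borel Z = return borel 0" using D by simp
    have "integrable P (\<lambda>w. Z w ^ (2*n)) \<and>
     (\<integral>w. Z w ^ (2*n) \<partial>P) = fact (2*n) / (2^n * fact n) * (s^2)^n" for n
    proof -
      have ir: "integrable (return borel (0::real)) (\<lambda>t. t ^ (2*n))"
        by (auto simp: integrable_iff_bounded nn_integral_return)
      have "(\<integral>t. t ^ (2*n) \<partial>return borel (0::real)) = 0 ^ (2*n)"
        by (rule integral_return) auto
      then show ?thesis unfolding I E D0 using True ir by (cases n) auto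
    qed
    then show ?thesis using s by blast
  next
    case False
    then have sp: "s > 0" using s by simp
    have D1: "distr P borel Z = density lborel (normal_density 0 s)" using D False by simp
    have "integrable P (\<lambda>w. Z w ^ (2*n)) \<and>
     (\<integral>w. Z w ^ (2*n) \<partial>P) = fact (2*n) / (2^n * fact n) * (s^2)^n" for n
    proof -
      have hb: "has_bochner_integral lborel (\<lambda>x. normal_density 0 s x * x ^ (2 * n))
            (fact (2 * n) / ((2 / s\<^sup>2)^n * fact n))"
        using normal_moment_even[OF sp, of 0 n] by simp
      have "integrable (density lborel (normal_density 0 s)) (\<lambda>t. t ^ (2*n))"
        using integrable.intros[OF hb]
        by (subst integrable_density) auto
      moreover have "(\<integral>t. t ^ (2*n) \<partial>density lborel (normal_density 0 s)) = fact (2 * n) / ((2 / s\<^sup>2)^n * fact n)"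
        using has_bochner_integral_integral_eq[OF hb]
        by (subst integral_density) auto
      moreover have "fact (2 * n) / ((2 / s\<^sup>2)^n * fact n) = fact (2*n) / (2^n * fact n) * ((s::real)^2)^n"
        using sp by (simp add: power_divide field_simps)
      ultimately show ?thesis unfolding I E D1 by simp
    qed
    then show ?thesis using s by blast
  qed
qed



theorem lemma3p1:
  fixes nu :: "'a::polish_space measure"
    and kap :: "'a \<Rightarrow> 'a \<Rightarrow> real"
    and P :: "'w measure"
    and Y :: "'w \<Rightarrow> 'a \<Rightarrow> real"
    and pi :: "('a \<Rightarrow> real) \<Rightarrow> 'a set measure"
    and Pt :: "('w \<times> 'a set) measure"
  assumes lc: "locally_compact_space (euclidean :: 'a topology)"
    and nu_sets: "sets nu = sets borel"
    and nu_radon: "\<And>C. compact C \<Longrightarrow> emeasure nu C < \<infinity>"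
    and nu_nonatomic: "\<And>x. emeasure nu {x} = 0"
    \<comment> \<open>sqrt K is the integral operator with kernel kap: bounded, self-adjoint, nonnegative on L^2(nu)\<close>
    and kap_meas: "(\<lambda>(x, z). kap x z) \<in> borel_measurable (nu \<Otimes>\<^sub>M nu)"
    and kap_L2: "AE x in nu. integrable nu (\<lambda>z. (kap x z)\<^sup>2)"
    and kap_sym: "AE p in nu \<Otimes>\<^sub>M nu. kap (fst p) (snd p) = kap (snd p) (fst p)"
    and kap_bdd: "\<exists>C. \<forall>f. f \<in> borel_measurable nu \<longrightarrow> integrable nu (\<lambda>z. (f z)\<^sup>2) \<longrightarrow>
        integrable nu (\<lambda>x. (\<integral>z. kap x z * f z \<partial>nu)\<^sup>2) \<and>
        (\<integral>x. (\<integral>z. kap x z * f z \<partial>nu)\<^sup>2 \<partial>nu) \<le> C * (\<integral>z. (f z)\<^sup>2 \<partial>nu)"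
    and kap_nonneg: "\<And>f. f \<in> borel_measurable nu \<Longrightarrow> integrable nu (\<lambda>z. (f z)\<^sup>2) \<Longrightarrow>
        (\<integral>x. f x * (\<integral>z. kap x z * f z \<partial>nu) \<partial>nu) \<ge> 0"
    \<comment> \<open>K = (sqrt K)^2 is locally of trace class: tr(P_L K P_L) = int_L k(x,x) nu(dx) finite\<close>
    and K_loc_trace: "\<And>L. L \<in> relcompact_borel \<Longrightarrow>
        (\<integral>\<^sup>+x\<in>L. (\<integral>\<^sup>+z. ennreal ((kap x z)\<^sup>2) \<partial>nu) \<partial>nu) < \<infinity>"
    \<comment> \<open>the random field Y\<close>
    and P_prob: "prob_space P"
    and Y_meas: "(\<lambda>(w, x). Y w x) \<in> borel_measurable (P \<Otimes>\<^sub>M nu)"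
    and Y_gauss: "AE x in nu. centered_gaussian P (\<lambda>w. Y w x)"
    and Y_cov: "AE p in nu \<Otimes>\<^sub>M nu.
        (\<integral>w. Y w (fst p) * Y w (snd p) \<partial>P) = kk nu kap (fst p) (snd p)"
    and Y_var: "AE x in nu. (\<integral>w. (Y w x)\<^sup>2 \<partial>P) = kk nu kap x x"
    \<comment> \<open>pi g is the Poisson point process with intensity g(x) nu(dx)\<close>
    and pi_poisson: "\<And>g. g \<in> borel_measurable nu \<Longrightarrow> (\<forall>x. g x \<ge> 0) \<Longrightarrow>
        (\<forall>L\<in>relcompact_borel. (\<integral>\<^sup>+x\<in>L. ennreal (g x) \<partial>nu) < \<infinity>) \<Longrightarrow> poisson_pp nu g (pi g)"
    \<comment> \<open>Pt(dw, dG) = P(dw) pi_{Y(x,w)^2 nu(dx)}(dG) on Omega x Gamma\<close>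
    and Pt_sets: "sets Pt = sets (P \<Otimes>\<^sub>M Gamma_M)"
    and Pt_rect: "\<And>A B. A \<in> sets P \<Longrightarrow> B \<in> sets Gamma_M \<Longrightarrow>
        emeasure Pt (A \<times> B) = (\<integral>\<^sup>+w. indicator A w * emeasure (pi (\<lambda>x. (Y w x)\<^sup>2)) B \<partial>P)"
  shows "\<forall>n::nat. AE x in nu.
           (\<integral>\<^sup>+G. ennreal ((papangelou P Pt Y x G) ^ n) \<partial>(distr Pt Gamma_M snd))
           \<le> ennreal (fact (2 * n) / (2 ^ n * fact n) * (kk nu kap x x) ^ n)"
proof -
  interpret P: prob_space P by (rule P_prob)
  have sp_nu: "space nu = UNIV" using sets_eq_imp_space_eq[OF nu_sets] space_borel by (rule trans)
  obtain T :: "'a set set" where T: "countable T" "\<forall>K\<in>T. compact K" "\<forall>C. compact C \<longrightarrow> (\<exists>K\<in>T. C \<subseteq> K)"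
    using countable_compact_family[OF lc] by meson
  have Tsets: "K \<in> sets nu" if "K \<in> T" for K
    using T(2) that nu_sets by (simp add: borel_closed compact_imp_closed)
  have Trc: "K \<in> relcompact_borel" if "K \<in> T" for K
    using T(2) that unfolding relcompact_borel_def
    by (simp add: borel_closed compact_imp_closed closure_closed)
  have sf: "sigma_finite_measure nu"
  proof (unfold_locales, intro exI conjI)
    show "countable T" by (rule T(1))
    show "T \<subseteq> sets nu" using Tsets by blast
    show "\<Union>T = space nu"
    proof -
      have "x \<in> \<Union>T" for x
      proof -
        obtain K where "K \<in> T" "{x} \<subseteq> K" using T(3) compact_sing by blast
        then show "x \<in> \<Union>T" by blast
      qed
      then show ?thesis using sp_nu by blast
    qed
    show "\<forall>a\<in>T. emeasure nu a \<noteq> \<infinity>" using T(2) nu_radon by (metis less_imp_neq)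
  qed
  interpret nu: sigma_finite_measure nu by (rule sf)
  interpret PN: pair_sigma_finite P nu
    by (simp add: pair_sigma_finite_def P.sigma_finite_measure_axioms sf)
  have Ym[measurable]: "(\<lambda>z. Y (fst z) (snd z)) \<in> borel_measurable (P \<Otimes>\<^sub>M nu)"
    using Y_meas by (simp add: case_prod_beta')
  have Ysec: "(\<lambda>x. Y w x) \<in> borel_measurable nu" if "w \<in> space P" for w
    using measurable_Pair2[OF Ym that] by simp
  have Ysec2[measurable]: "(\<lambda>w. Y w x) \<in> borel_measurable P" for x
    using measurable_Pair1[OF Ym, of x] sp_nu by simp
  have goodx: "AE x in nu. centered_gaussian P (\<lambda>w. Y w x) \<and> (\<integral>w. (Y w x)\<^sup>2 \<partial>P) = kk nu kap x x
      \<and> integrable nu (\<lambda>z. (kap x z)\<^sup>2)"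
    using Y_gauss Y_var kap_L2 by eventually_elim (intro conjI)
  have innerx: "AE x in nu. (\<integral>\<^sup>+w. ennreal ((Y w x)\<^sup>2) \<partial>P) = (\<integral>\<^sup>+z. ennreal ((kap x z)\<^sup>2) \<partial>nu)"
    using goodx
  proof eventually_elim
    case (elim x)
    then obtain s where s: "\<forall>n. integrable P (\<lambda>w. Y w x ^ (2*n)) \<and>
     (\<integral>w. Y w x ^ (2*n) \<partial>P) = fact (2*n) / (2^n * fact n) * (s^2)^n"
      using gauss_moments[OF P_prob] by blast
    have iY: "integrable P (\<lambda>w. (Y w x)\<^sup>2)" using s[rule_format, of 1] by simp
    have "(\<integral>\<^sup>+w. ennreal ((Y w x)\<^sup>2) \<partial>P) = ennreal (kk nu kap x x)"
      using nn_integral_eq_integral[OF iY] elim by simp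
    also have "\<dots> = (\<integral>\<^sup>+z. ennreal ((kap x z)\<^sup>2) \<partial>nu)"
      using nn_integral_eq_integral[of nu "\<lambda>z. (kap x z)\<^sup>2"] elim
      by (simp add: kk_def power2_eq_square)
    finally show ?case .
  qed
  have locint: "AE w in P. \<forall>K\<in>T. (\<integral>\<^sup>+x\<in>K. ennreal ((Y w x)\<^sup>2) \<partial>nu) < \<infinity>"
  proof (rule AE_ball_countable'[OF _ T(1)])
    fix K assume K: "K \<in> T"
    have Km[measurable]: "K \<in> sets nu" using Tsets[OF K] .
    have m1: "(\<lambda>(w, x). indicator K x * ennreal ((Y w x)\<^sup>2)) \<in> borel_measurable (P \<Otimes>\<^sub>M nu)"
      by measurable
    have "(\<integral>\<^sup>+w. (\<integral>\<^sup>+x. indicator K x * ennreal ((Y w x)\<^sup>2) \<partial>nu) \<partial>P)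
        = (\<integral>\<^sup>+x. (\<integral>\<^sup>+w. indicator K x * ennreal ((Y w x)\<^sup>2) \<partial>P) \<partial>nu)"
      using PN.Fubini'[OF m1] by simp
    also have "\<dots> = (\<integral>\<^sup>+x. indicator K x * (\<integral>\<^sup>+w. ennreal ((Y w x)\<^sup>2) \<partial>P) \<partial>nu)"
      by (rule nn_integral_cong, rule nn_integral_cmult) measurable
    also have "\<dots> = (\<integral>\<^sup>+x. indicator K x * (\<integral>\<^sup>+z. ennreal ((kap x z)\<^sup>2) \<partial>nu) \<partial>nu)"
      by (rule nn_integral_cong_AE) (use innerx in auto)
    also have "\<dots> < \<infinity>" using K_loc_trace[OF Trc[OF K]] by (simp add: mult.commute)
    finally have fin: "(\<integral>\<^sup>+w. (\<integral>\<^sup>+x. indicator K x * ennreal ((Y w x)\<^sup>2) \<partial>nu) \<partial>P) \<noteq> \<infinity>" by (rule less_imp_neq)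
    have "AE w in P. (\<integral>\<^sup>+x. indicator K x * ennreal ((Y w x)\<^sup>2) \<partial>nu) \<noteq> \<infinity>"
      by (rule nn_integral_PInf_AE[OF _ fin]) measurable
    then show "AE w in P. (\<integral>\<^sup>+x\<in>K. ennreal ((Y w x)\<^sup>2) \<partial>nu) < \<infinity>"
      by (simp add: mult.commute top.not_eq_extremum)
  qed
  have piprob: "AE w in P. emeasure (pi (\<lambda>x. (Y w x)\<^sup>2)) (space Gamma_M) = 1"
    using locint AE_space
  proof eventually_elim
    case (elim w)
    then have w: "w \<in> space P" and fin: "\<forall>K\<in>T. (\<integral>\<^sup>+x\<in>K. ennreal ((Y w x)\<^sup>2) \<partial>nu) < \<infinity>" by auto
    have gm: "(\<lambda>x. (Y w x)\<^sup>2) \<in> borel_measurable nu" using Ysec[OF w] by measurable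
    have "\<forall>L\<in>relcompact_borel. (\<integral>\<^sup>+x\<in>L. ennreal ((Y w x)\<^sup>2) \<partial>nu) < \<infinity>"
    proof
      fix L :: "'a set" assume L: "L \<in> relcompact_borel"
      then obtain K where K: "K \<in> T" "closure L \<subseteq> K" using T(3) unfolding relcompact_borel_def by blast
      have "L \<subseteq> K" using K(2) closure_subset by blast
      then have "(\<integral>\<^sup>+x\<in>L. ennreal ((Y w x)\<^sup>2) \<partial>nu) \<le> (\<integral>\<^sup>+x\<in>K. ennreal ((Y w x)\<^sup>2) \<partial>nu)"
        by (intro nn_integral_mono) (auto split: split_indicator)
      also have "\<dots> < \<infinity>" using fin K(1) by blast
      finally show "(\<integral>\<^sup>+x\<in>L. ennreal ((Y w x)\<^sup>2) \<partial>nu) < \<infinity>" .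
    qed
    then have pp: "poisson_pp nu (\<lambda>x. (Y w x)\<^sup>2) (pi (\<lambda>x. (Y w x)\<^sup>2))"
      using pi_poisson[OF gm] by simp
    then interpret Q: prob_space "pi (\<lambda>x. (Y w x)\<^sup>2)" unfolding poisson_pp_def by blast
    have "space (pi (\<lambda>x. (Y w x)\<^sup>2)) = space Gamma_M"
      using pp unfolding poisson_pp_def by (metis sets_eq_imp_space_eq)
    then show ?case
      using Q.emeasure_space_1 by simp
  qed
  have spPt: "space Pt = space P \<times> space Gamma_M"
    using sets_eq_imp_space_eq[OF Pt_sets] by (simp add: space_pair_measure)
  have PtA: "emeasure Pt (A \<times> space Gamma_M) = emeasure P A" if A: "A \<in> sets P" for A
  proof -
    have "emeasure Pt (A \<times> space Gamma_M)
        = (\<integral>\<^sup>+w. indicator A w * emeasure (pi (\<lambda>x. (Y w x)\<^sup>2)) (space Gamma_M) \<partial>P)"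
      using Pt_rect[OF A] by simp
    also have "\<dots> = (\<integral>\<^sup>+w. indicator A w \<partial>P)"
      by (rule nn_integral_cong_AE) (use piprob in auto)
    also have "\<dots> = emeasure P A" using A by simp
    finally show ?thesis .
  qed
  have Ptprob: "prob_space Pt"
    by (rule prob_spaceI) (simp add: spPt PtA P.emeasure_space_1)
  interpret Pt: prob_space Pt by (rule Ptprob)
  have fstm[measurable]: "fst \<in> measurable Pt P"
    using measurable_cong_sets[OF Pt_sets refl] measurable_fst by blast
  have sndm[measurable]: "snd \<in> measurable Pt Gamma_M"
    using measurable_cong_sets[OF Pt_sets refl] measurable_snd by blast
  have distrfst: "distr Pt P fst = P"
  proof (rule measure_eqI)
    show "sets (distr Pt P fst) = sets P" by simp
    fix A assume "A \<in> sets (distr Pt P fst)"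
    then have A: "A \<in> sets P" by simp
    have "fst -` A \<inter> space Pt = A \<times> space Gamma_M"
      using sets.sets_into_space[OF A] spPt by auto
    then show "emeasure (distr Pt P fst) A = emeasure P A"
      using PtA[OF A] A by (simp add: emeasure_distr)
  qed
  define F where "F = vimage_algebra (space Pt) snd Gamma_M"
  have sndF: "snd \<in> space Pt \<rightarrow> space Gamma_M"
  proof (rule Pi_I)
    fix z assume "z \<in> space Pt"
    then have "z \<in> space P \<times> space Gamma_M" by (simp only: spPt)
    then show "snd z \<in> space Gamma_M" by (rule mem_Times_iff[THEN iffD1, THEN conjunct2])
  qed
  have subalg: "subalgebra Pt F"
    unfolding subalgebra_def F_def
  proof
    show "space (vimage_algebra (space Pt) snd Gamma_M) = space Pt" by simp
    show "sets (vimage_algebra (space Pt) snd Gamma_M) \<subseteq> sets Pt"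
      unfolding sets_vimage_algebra2[OF sndF] using measurable_sets[OF sndm] by blast
  qed
  have "finite_measure_subalgebra Pt F"
    by (rule finite_measure_subalgebra.intro[OF Pt.finite_measure_axioms])
      (rule finite_measure_subalgebra_axioms.intro[OF subalg])
  then interpret SF: sigma_finite_subalgebra Pt F
    by (rule finite_measure_subalgebra_is_sigma_finite)
  define w0 where "w0 = (SOME w. w \<in> space P)"
  have w0: "w0 \<in> space P" unfolding w0_def some_in_eq by (rule P.not_empty)
  show ?thesis
  proof
    fix n :: nat
    show "AE x in nu.
           (\<integral>\<^sup>+G. ennreal ((papangelou P Pt Y x G) ^ n) \<partial>(distr Pt Gamma_M snd))
           \<le> ennreal (fact (2 * n) / (2 ^ n * fact n) * (kk nu kap x x) ^ n)"
      using goodx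
    proof eventually_elim
      case (elim x)
      then have cg: "centered_gaussian P (\<lambda>w. Y w x)" and var: "(\<integral>w. (Y w x)\<^sup>2 \<partial>P) = kk nu kap x x"
        by auto
      have Yxm[measurable]: "(\<lambda>w. Y w x) \<in> borel_measurable P"
        using cg unfolding centered_gaussian_def by blast
      obtain s where s: "\<forall>n. integrable P (\<lambda>w. Y w x ^ (2*n)) \<and>
        (\<integral>w. Y w x ^ (2*n) \<partial>P) = fact (2*n) / (2^n * fact n) * (s^2)^n"
        using gauss_moments[OF P_prob cg] by blast
      have "s^2 = kk nu kap x x" using s[rule_format, of 1] var by simp
      then have mom: "integrable P (\<lambda>w. Y w x ^ (2*n))"
        "(\<integral>w. Y w x ^ (2*n) \<partial>P) = fact (2*n) / (2^n * fact n) * (kk nu kap x x)^n"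
        using s by auto
      define f :: "'w \<times> 'a set \<Rightarrow> real" where "f = (\<lambda>z. (Y (fst z) x)\<^sup>2)"
      have fm[measurable]: "f \<in> borel_measurable Pt" unfolding f_def by measurable
      have qf: "\<bar>f z\<bar> ^ n = Y (fst z) x ^ (2*n)" for z
        unfolding f_def by (simp add: power_mult)
      have intf: "integrable Pt f"
      proof -
        have "integrable P (\<lambda>w. (Y w x)\<^sup>2)" using s[rule_format, of 1] by simp
        then have "integrable (distr Pt P fst) (\<lambda>w. (Y w x)\<^sup>2)" using distrfst by simp
        then show ?thesis unfolding f_def by (subst (asm) integrable_distr_eq) auto
      qed
      have intq: "integrable Pt (\<lambda>z. \<bar>f z\<bar> ^ n)"
      proof -
        have "integrable (distr Pt P fst) (\<lambda>w. Y w x ^ (2*n))" using distrfst mom(1) by simp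
        then show ?thesis unfolding qf by (subst (asm) integrable_distr_eq) auto
      qed
      have intqv: "(\<integral>z. \<bar>f z\<bar> ^ n \<partial>Pt) = fact (2*n) / (2^n * fact n) * (kk nu kap x x)^n"
      proof -
        have "(\<integral>z. \<bar>f z\<bar> ^ n \<partial>Pt) = (\<integral>z. Y (fst z) x ^ (2*n) \<partial>Pt)" unfolding qf ..
        also have "\<dots> = (\<integral>w. Y w x ^ (2*n) \<partial>distr Pt P fst)"
          by (rule integral_distr[symmetric]) auto
        also have "\<dots> = (\<integral>w. Y w x ^ (2*n) \<partial>P)" using distrfst by simp
        finally show ?thesis using mom(2) by simp
      qed
      define h where "h = real_cond_exp Pt F f"
      have J: "AE z in Pt. \<bar>h z\<bar> ^ n \<le> real_cond_exp Pt F (\<lambda>z. \<bar>f z\<bar> ^ n) z"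
        unfolding h_def
        by (rule SF.real_cond_exp_jensens_inequality(2)[OF intf _ _ intq convex_abs_power])
          auto
      have pos: "AE z in Pt. h z \<ge> 0"
        unfolding h_def by (rule SF.real_cond_exp_pos) (auto simp: f_def)
      have hF: "h \<in> borel_measurable F" unfolding h_def by simp
      have hP: "h \<in> borel_measurable (P \<Otimes>\<^sub>M Gamma_M)"
        using borel_measurable_cond_exp2[of Pt F f] measurable_cong_sets[OF Pt_sets refl]
        unfolding h_def by blast
      have pap: "papangelou P Pt Y x G = h (w0, G)" for G
        unfolding papangelou_def h_def f_def F_def w0_def ..
      have papm: "(\<lambda>G. ennreal (h (w0, G) ^ n)) \<in> borel_measurable Gamma_M"
        using measurable_Pair2[OF hP w0] by measurable
      have fac: "h (w0, snd z) = h z" if z: "z \<in> space Pt" for z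
      proof (rule vimage_factor[OF hF[unfolded F_def] sndF])
        have "snd z \<in> space Gamma_M" using sndF z by (rule funcset_mem)
        then have "(w0, snd z) \<in> space P \<times> space Gamma_M" using w0 by (intro SigmaI)
        then show "(w0, snd z) \<in> space Pt" by (simp only: spPt)
        show "z \<in> space Pt" by (rule z)
        show "snd (w0, snd z) = snd z" by (rule snd_conv)
      qed
      have "(\<integral>\<^sup>+G. ennreal ((papangelou P Pt Y x G) ^ n) \<partial>(distr Pt Gamma_M snd))
          = (\<integral>\<^sup>+G. ennreal (h (w0, G) ^ n) \<partial>(distr Pt Gamma_M snd))"
        unfolding pap ..
      also have "\<dots> = (\<integral>\<^sup>+z. ennreal (h (w0, snd z) ^ n) \<partial>Pt)"
        by (rule nn_integral_distr[OF sndm]) (use papm in simp)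
      also have "\<dots> = (\<integral>\<^sup>+z. ennreal (h z ^ n) \<partial>Pt)"
        by (rule nn_integral_cong) (simp add: fac)
      also have "\<dots> \<le> (\<integral>\<^sup>+z. ennreal (real_cond_exp Pt F (\<lambda>z. \<bar>f z\<bar> ^ n) z) \<partial>Pt)"
      proof (rule nn_integral_mono_AE)
        show "AE z in Pt. ennreal (h z ^ n) \<le> ennreal (real_cond_exp Pt F (\<lambda>z. \<bar>f z\<bar> ^ n) z)"
          using J pos
        proof eventually_elim
          case (elim z)
          then show ?case by (intro ennreal_leI) simp
        qed
      qed
      also have "\<dots> = ennreal (\<integral>z. real_cond_exp Pt F (\<lambda>z. \<bar>f z\<bar> ^ n) z \<partial>Pt)"
      proof (rule nn_integral_eq_integral)
        show "integrable Pt (real_cond_exp Pt F (\<lambda>z. \<bar>f z\<bar> ^ n))"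
          by (rule SF.real_cond_exp_int(1)[OF intq])
        show "AE z in Pt. 0 \<le> real_cond_exp Pt F (\<lambda>z. \<bar>f z\<bar> ^ n) z"
          using J by eventually_elim (rule order_trans[rotated], assumption, simp)
      qed
      also have "\<dots> = ennreal (\<integral>z. \<bar>f z\<bar> ^ n \<partial>Pt)"
        using SF.real_cond_exp_int(2)[OF intq] by simp
      also have "\<dots> = ennreal (fact (2 * n) / (2 ^ n * fact n) * (kk nu kap x x) ^ n)"
        using intqv by simp
      finally show ?case .
    qed
  qed
qed

end
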